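(* Let $m\ge1$, let $F$ be a population CDF, $t$ a point, and $\lambda_1,\dots,\lambda_m\ge0$ with $\sum_{r=1}^m\lambda_r=1$. With $\mathbb{B}_{(r)}(x)=\frac1r\sum_{i=1}^r\mathbb{B}(x,i,m+1-i)$ and $\beta_{(r)}(x)=\mathbb{B}_{(r)}'(x)$, define \[\sigma_{ml}^2(t)=\Big(\sum_{r=1}^m\lambda_r\frac{\beta_{(r)}^2(F(t))}{\mathbb{B}_{(r)}(F(t))(1-\mathbb{B}_{(r)}(F(t)))}\Big)^{-1},\qquad \sigma_{mb}^2(t)=\frac{\sum_{r=1}^m\lambda_r\mathbb{B}_{(r)}(F(t))(1-\mathbb{B}_{(r)}(F(t)))}{\big(\sum_{r=1}^m\lambda_r\beta_{(r)}(F(t))\big)^2},\] the asymptotic variances (under perfect ranking) of $\sqrt n$ times the errors of the maximum likelihood and moment-based CDF estimators from a MinPNS sample whose stratum proportions converge to $\lambda_r$. Then $\sigma_{ml}^2(t)\le\sigma_{mb}^2(t)$, and equality holds if and only if either $m=1$ or there exists $r\in\{1,\dots,m\}$ with $\lambda_r=1$.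
   Context: $\mathbb{B}(x,i,m+1-i)=\int_0^x i\binom{m}{i}u^{i-1}(1-u)^{m-i}\,du$ is the Beta$(i,m+1-i)$ CDF at $x$, so $\beta_{(r)}(x)=\frac1r\sum_{i=1}^r\beta(x,i,m+1-i)$ with $\beta(\cdot,i,m+1-i)$ the Beta density. In a MinPNS (minimum partial nomination sampling) sample under perfect ranking, a measured unit in stratum $r$ is a uniformly random one of the $r$ smallest of $m$ i.i.d. draws from $F$, hence has CDF $\mathbb{B}_{(r)}(F(t))$. *)

theory Defs
  imports "HOL-Probability.Probability"
begin

text \<open>Beta(i, m+1-i) density at u (normalising constant 1/B(i,m+1-i) = i * (m choose i)).\<close>
definition beta_dens :: "nat \<Rightarrow> nat \<Rightarrow> real \<Rightarrow> real" where
  "beta_dens m i u = real i * real (m choose i) * u ^ (i - 1) * (1 - u) ^ (m - i)"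

definition beta_cdf :: "nat \<Rightarrow> nat \<Rightarrow> real \<Rightarrow> real" where
  "beta_cdf m i x = integral {0..x} (beta_dens m i)"

definition Bstrat :: "nat \<Rightarrow> nat \<Rightarrow> real \<Rightarrow> real" where
  "Bstrat m r x = (1 / real r) * (\<Sum>i=1..r. beta_cdf m i x)"

definition bstrat :: "nat \<Rightarrow> nat \<Rightarrow> real \<Rightarrow> real" where
  "bstrat m r x = (1 / real r) * (\<Sum>i=1..r. beta_dens m i x)"

definition sigma_ml2 :: "nat \<Rightarrow> (nat \<Rightarrow> real) \<Rightarrow> real \<Rightarrow> real" where
  "sigma_ml2 m lam x = inverse (\<Sum>r=1..m. lam r * (bstrat m r x)\<^sup>2
        / (Bstrat m r x * (1 - Bstrat m r x)))"

definition sigma_mb2 :: "nat \<Rightarrow> (nat \<Rightarrow> real) \<Rightarrow> real \<Rightarrow> real" where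
  "sigma_mb2 m lam x = (\<Sum>r=1..m. lam r * Bstrat m r x * (1 - Bstrat m r x))
        / (\<Sum>r=1..m. lam r * bstrat m r x)\<^sup>2"

end

theory Submission
  imports Defs
begin


lemma binom_absorb_real:
  "real (Suc k) * real (n choose Suc k) = real (n - k) * real (n choose k)"
proof -
  have "Suc k * (n choose Suc k) = (n - k) * (n choose k)"
    using binomial_absorption[of k n] binomial_absorb_comp[of n k] by simp
  then show ?thesis by (metis of_nat_mult)
qed

lemma binom_step:
  assumes "c + 2 \<le> d"
  shows "real (M choose c) * real (M choose d) \<le> real (M choose Suc c) * real (M choose (d - 1))"
proof -
  obtain d' where d: "d = Suc d'" using assms by (cases d) auto
  have h1: "real (Suc c) * real (M choose Suc c) = real (M - c) * real (M choose c)"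
    by (rule binom_absorb_real)
  have h2: "real d * real (M choose d) = real (M - d') * real (M choose d')"
    using binom_absorb_real[of d' M] d by simp
  have key: "real (Suc c) * real (M - d') \<le> real (M - c) * real d"
  proof (cases "d' \<le> M")
    case True
    then have "real (M - d') = real M - real d'" "real (M - c) = real M - real c"
      using assms d by auto
    moreover have "(real c + 1) * (real M + 1) \<le> real d * (real M + 1)"
      using assms by (intro mult_right_mono) auto
    ultimately show ?thesis using d by (simp add: algebra_simps)
  next
    case False
    then show ?thesis by simp
  qed
  have pos: "0 < real (Suc c) * real d" using d by simp
  have "real (Suc c) * real d * (real (M choose c) * real (M choose d))
      = real (M choose c) * real (Suc c) * (real d * real (M choose d))" by (simp add: algebra_simps)
  also have "\<dots> = real (M choose c) * real (M choose d') * (real (Suc c) * real (M - d'))"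
    by (simp add: h2 algebra_simps)
  also have "\<dots> \<le> real (M choose c) * real (M choose d') * (real (M - c) * real d)"
    by (intro mult_left_mono key) auto
  also have "\<dots> = real d * real (M choose d') * (real (M - c) * real (M choose c))"
    by (simp add: algebra_simps)
  also have "\<dots> = real d * real (M choose d') * (real (Suc c) * real (M choose Suc c))"
    by (simp only: h1)
  also have "\<dots> = real (Suc c) * real d * (real (M choose Suc c) * real (M choose (d - 1)))"
    by (simp add: d algebra_simps)
  finally show ?thesis using pos by (rule mult_left_le_imp_le)
qed

lemma binom_lc_aux:
  "a - c = n \<Longrightarrow> a + b = c + d \<Longrightarrow> c \<le> a \<Longrightarrow> a \<le> b \<Longrightarrow> b \<le> d \<Longrightarrow>
   real (M choose c) * real (M choose d) \<le> real (M choose a) * real (M choose b)"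
proof (induction n arbitrary: c d)
  case 0
  then have "a = c" "b = d" by auto
  then show ?case by simp
next
  case (Suc n)
  have "c + 2 \<le> d" using Suc.prems by linarith
  then have st: "real (M choose c) * real (M choose d) \<le> real (M choose Suc c) * real (M choose (d - 1))"
    by (rule binom_step)
  have "real (M choose Suc c) * real (M choose (d - 1)) \<le> real (M choose a) * real (M choose b)"
    using Suc.prems by (intro Suc.IH) auto
  with st show ?case by linarith
qed

lemma binom_lc:
  assumes "a + b = c + d" "c \<le> a" "a \<le> d" "c \<le> b" "b \<le> d"
  shows "real (M choose c) * real (M choose d) \<le> real (M choose a) * real (M choose b)"
proof (cases "a \<le> b")
  case True
  then show ?thesis using assms binom_lc_aux[of a c "a - c" b d M] by auto
next
  case False
  then have "real (M choose c) * real (M choose d) \<le> real (M choose b) * real (M choose a)"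
    using assms binom_lc_aux[of b c "b - c" a d M] by auto
  then show ?thesis by (simp add: mult.commute)
qed

lemma binom_BL:
  assumes "k < i" "i < r" "r \<le> m" "j = k + r - i"
  shows "real r * real (m - k) * (real (m choose r) * real (m choose k))
       \<le> real i * real (m - j) * (real (m choose i) * real (m choose j))"
proof -
  have e1: "real i * real (m choose i) = real m * real ((m - 1) choose (i - 1))"
    using times_binomial_minus1_eq[of i m] assms by (metis of_nat_mult gr_zeroI less_zeroE zero_less_iff_neq_zero)
  have e2: "real r * real (m choose r) = real m * real ((m - 1) choose (r - 1))"
    using times_binomial_minus1_eq[of r m] assms by (metis of_nat_mult gr_zeroI less_zeroE zero_less_iff_neq_zero less_trans)
  have e3: "real (m - j) * real (m choose j) = real m * real ((m - 1) choose j)"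
    using binomial_absorb_comp[of m j] by (metis of_nat_mult)
  have e4: "real (m - k) * real (m choose k) = real m * real ((m - 1) choose k)"
    using binomial_absorb_comp[of m k] by (metis of_nat_mult)
  have lc: "real ((m - 1) choose k) * real ((m - 1) choose (r - 1))
      \<le> real ((m - 1) choose (i - 1)) * real ((m - 1) choose j)"
    by (rule binom_lc) (use assms in auto)
  have "real r * real (m - k) * (real (m choose r) * real (m choose k))
      = (real r * real (m choose r)) * (real (m - k) * real (m choose k))" by (simp add: algebra_simps)
  also have "\<dots> = real m * real m * (real ((m - 1) choose k) * real ((m - 1) choose (r - 1)))"
    by (simp only: e2 e4) (simp add: algebra_simps)
  also have "\<dots> \<le> real m * real m * (real ((m - 1) choose (i - 1)) * real ((m - 1) choose j))"
    by (intro mult_left_mono lc) auto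
  also have "\<dots> = (real i * real (m choose i)) * (real (m - j) * real (m choose j))"
    by (simp only: e1 e3) (simp add: algebra_simps)
  also have "\<dots> = real i * real (m - j) * (real (m choose i) * real (m choose j))"
    by (simp add: algebra_simps)
  finally show ?thesis .
qed

definition pb :: "nat \<Rightarrow> real \<Rightarrow> nat \<Rightarrow> real" where
  "pb m y k = real (m choose k) * y ^ k * (1 - y) ^ (m - k)"

lemma pb_pos: "0 < y \<Longrightarrow> y < 1 \<Longrightarrow> k \<le> m \<Longrightarrow> 0 < pb m y k"
  unfolding pb_def by (intro mult_pos_pos) auto

lemma pb_nonneg: "0 \<le> y \<Longrightarrow> y \<le> 1 \<Longrightarrow> 0 \<le> pb m y k"
  unfolding pb_def by (intro mult_nonneg_nonneg) auto

lemma pb_prod_BL: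
  assumes "k < i" "i < r" "r \<le> m" "j = k + r - i" "0 \<le> y" "y \<le> 1"
  shows "real r * real (m - k) * (pb m y r * pb m y k) \<le> real i * real (m - j) * (pb m y i * pb m y j)"
proof -
  define w where "w = y ^ (r + k) * (1 - y) ^ ((m - r) + (m - k))"
  have w0: "0 \<le> w" unfolding w_def using assms by auto
  have "pb m y r * pb m y k = real (m choose r) * real (m choose k) * w"
    unfolding pb_def w_def by (simp add: power_add algebra_simps)
  moreover have "pb m y i * pb m y j = real (m choose i) * real (m choose j) * w"
  proof -
    have "i + j = r + k" "(m - i) + (m - j) = (m - r) + (m - k)" using assms by auto
    then show ?thesis unfolding pb_def w_def by (simp add: power_add[symmetric] algebra_simps)
  qed
  ultimately show ?thesis
    using mult_right_mono[OF binom_BL[OF assms(1-4)] w0] by (simp add: algebra_simps)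
qed

lemma double_sum_tri:
  fixes f :: "nat \<Rightarrow> real"
  shows "(\<Sum>i<n. \<Sum>k<i. f k) = (\<Sum>k<n. real (n - 1 - k) * f k)"
proof (induction n)
  case 0 then show ?case by simp
next
  case (Suc n)
  have "(\<Sum>i<Suc n. \<Sum>k<i. f k) = (\<Sum>k<n. real (n - 1 - k) * f k) + (\<Sum>k<n. f k)"
    using Suc by simp
  also have "\<dots> = (\<Sum>k<n. real (n - k) * f k)"
    by (simp add: sum.distrib[symmetric] algebra_simps of_nat_diff)
  also have "\<dots> = (\<Sum>k<Suc n. real (Suc n - 1 - k) * f k)" by simp
  finally show ?case .
qed

lemma key_comb:
  assumes y: "0 < y" "y < 1" and r: "1 \<le> r" "r < m"
  shows "real r * real (m - r) * pb m y r * (\<Sum>k<r. real (r - k) * pb m y k)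
       < (\<Sum>i\<le>r. real i * pb m y i) * (\<Sum>j<r. real (m - j) * pb m y j)"
proof -
  define P where "P = pb m y"
  define g where "g k = real r * real (m - k) * (P r * P k)" for k
  define B where "B = (\<Sum>j<r. real (m - j) * P j)"
  have P0: "\<And>k. 0 \<le> P k" unfolding P_def using pb_nonneg y by auto
  have A: "(\<Sum>i\<le>r. real i * P i) = real r * P r + (\<Sum>i<r. real i * P i)"
    by (simp add: lessThan_Suc_atMost[symmetric])
  have S2: "real r * P r * B = (\<Sum>k<r. g k)"
    unfolding B_def g_def by (simp add: sum_distrib_left algebra_simps)
  have S3: "(\<Sum>i<r. real i * P i) * B = (\<Sum>i<r. \<Sum>j<r. real i * real (m - j) * (P i * P j))"
    unfolding B_def by (simp add: sum_product algebra_simps)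
  have S4: "(\<Sum>k<i. g k) \<le> (\<Sum>j<r. real i * real (m - j) * (P i * P j))" if i: "i < r" for i
  proof -
    have "(\<Sum>k<i. g k) \<le> (\<Sum>k<i. real i * real (m - (k + r - i)) * (P i * P (k + r - i)))"
      unfolding g_def P_def
      by (intro sum_mono pb_prod_BL) (use i r y in auto)
    also have "\<dots> = (\<Sum>j\<in>(\<lambda>k. k + r - i) ` {..<i}. real i * real (m - j) * (P i * P j))"
      by (subst sum.reindex) (use i in \<open>auto simp: inj_on_def\<close>)
    also have "\<dots> \<le> (\<Sum>j<r. real i * real (m - j) * (P i * P j))"
      by (intro sum_mono2) (use i P0 in auto)
    finally show ?thesis .
  qed
  have "(\<Sum>k<r. real (r - 1 - k) * g k) = (\<Sum>i<r. \<Sum>k<i. g k)"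
    by (rule double_sum_tri[symmetric])
  also have "\<dots> \<le> (\<Sum>i<r. \<Sum>j<r. real i * real (m - j) * (P i * P j))"
    by (intro sum_mono S4) auto
  finally have S5: "(\<Sum>k<r. real (r - 1 - k) * g k) \<le> (\<Sum>i<r. real i * P i) * B"
    using S3 by simp
  have S6: "(\<Sum>k<r. real (r - k) * g k) \<le> (\<Sum>i\<le>r. real i * P i) * B"
  proof -
    have "(\<Sum>k<r. real (r - k) * g k) = (\<Sum>k<r. g k) + (\<Sum>k<r. real (r - 1 - k) * g k)"
      by (simp add: sum.distrib[symmetric]) (rule sum.cong, auto simp: of_nat_diff algebra_simps)
    also have "\<dots> \<le> real r * P r * B + (\<Sum>i<r. real i * P i) * B"
      using S2 S5 by simp
    also have "\<dots> = (\<Sum>i\<le>r. real i * P i) * B" by (simp add: A algebra_simps)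
    finally show ?thesis .
  qed
  have S7: "real r * real (m - r) * P r * (\<Sum>k<r. real (r - k) * P k) < (\<Sum>k<r. real (r - k) * g k)"
  proof -
    have "real r * real (m - r) * P r * (\<Sum>k<r. real (r - k) * P k)
        = (\<Sum>k<r. real (r - k) * (real r * real (m - r) * (P r * P k)))"
      by (simp add: sum_distrib_left algebra_simps)
    also have "\<dots> < (\<Sum>k<r. real (r - k) * g k)"
    proof (rule sum_strict_mono_ex1)
      show "\<forall>k\<in>{..<r}. real (r - k) * (real r * real (m - r) * (P r * P k)) \<le> real (r - k) * g k"
        unfolding g_def using P0 by (auto intro!: mult_left_mono mult_right_mono)
      have "0 < P r" "0 < P 0" unfolding P_def using pb_pos y r by auto
      then have "real (r - 0) * (real r * real (m - r) * (P r * P 0)) < real (r - 0) * g 0"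
        unfolding g_def using r by (intro mult_strict_left_mono mult_strict_right_mono) auto
      then show "\<exists>k\<in>{..<r}. real (r - k) * (real r * real (m - r) * (P r * P k)) < real (r - k) * g k"
        using r by (intro bexI[of _ 0]) auto
    qed simp
    finally show ?thesis .
  qed
  show ?thesis using S6 S7 unfolding P_def B_def by simp
qed

lemma alg_main:
  fixes a u p T r :: real
  assumes r: "1 \<le> r" and a: "0 < a" and T: "0 < T" and up: "p \<le> u" and p0: "0 \<le> p" and u1: "u \<le> 1"
    and Tdef: "T = r * (1 - u) - a"
    and key: "r * ((r + 1) * p) * T < a ^ 2"
  shows "(r + 1) * (a + (r + 1) * p) * ((a + r * u) * T) < r * a * ((a + r * u + u) * (T + (1 - u)))"
proof -
  define pi where "pi = (r + 1) * p"
  define v where "v = 1 - u"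
  define S where "S = a + r * u"
  define E where "E = a * v - pi * T"
  have Tv: "T = r * v - a" using Tdef v_def by simp
  have key': "r * pi * T < a ^ 2" using key pi_def by (simp add: algebra_simps)
  have piT: "pi * T < a ^ 2 / r" using key' r by (simp add: field_simps)
  have aT: "a * T = r * (a * v) - a ^ 2" unfolding Tv by (simp add: algebra_simps power2_eq_square)
  have "a * T / r = a * v - a ^ 2 / r" unfolding aT using r by (simp add: field_simps)
  moreover have "0 < a * T / r" using a T r by simp
  ultimately have E0: "0 < E" unfolding E_def using piT by linarith
  have upi: "pi \<le> (r + 1) * u" unfolding pi_def using up r by (intro mult_left_mono) auto
  have D: "r * a * ((S + u) * (T + v)) - (r + 1) * (a + pi) * (S * T)
        = a ^ 3 - (r + 1) * pi * a * T + r * (r + 1) * u * E"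
  proof -
    have uv: "u = 1 - v" by (simp add: v_def)
    show ?thesis unfolding E_def S_def Tv uv by (simp add: algebra_simps power3_eq_cube)
  qed
  have "r * pi * E \<le> r * ((r + 1) * u) * E"
    using upi E0 r by (intro mult_right_mono mult_left_mono) auto
  then have "a ^ 3 - (r + 1) * pi * a * T + r * pi * E \<le> a ^ 3 - (r + 1) * pi * a * T + r * (r + 1) * u * E"
    by (simp add: algebra_simps)
  moreover have "a ^ 3 - (r + 1) * pi * a * T + r * pi * E = (a + pi) * (a ^ 2 - r * pi * T)"
    unfolding E_def Tv by (simp add: algebra_simps power3_eq_cube power2_eq_square)
  moreover have "0 < (a + pi) * (a ^ 2 - r * pi * T)"
  proof -
    have "0 \<le> pi" unfolding pi_def using p0 r by simp
    then show ?thesis using key' a by (intro mult_pos_pos) auto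
  qed
  ultimately have "0 < r * a * ((S + u) * (T + v)) - (r + 1) * (a + pi) * (S * T)"
    using D by linarith
  then show ?thesis unfolding S_def v_def pi_def by simp
qed




lemma pb_deriv:
  "((\<lambda>u. pb m u i) has_real_derivative (beta_dens m i u - beta_dens m (Suc i) u)) (at u)"
proof -
  define c where "c = real (m choose i)"
  define n where "n = m - i"
  have d1: "((\<lambda>u. u ^ i) has_real_derivative real i * u ^ (i - Suc 0)) (at u)"
    by (rule DERIV_pow)
  have d0: "((\<lambda>u. 1 - u) has_real_derivative 0 - 1) (at u)"
    by (intro DERIV_diff DERIV_const DERIV_ident)
  have d2: "((\<lambda>u. (1 - u) ^ n) has_real_derivative of_nat n * ((0 - 1) * (1 - u) ^ (n - Suc 0))) (at u)"
    by (rule DERIV_power[OF d0])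
  have d3: "((\<lambda>u. u ^ i * (1 - u) ^ n) has_real_derivative
      u ^ i * (of_nat n * ((0 - 1) * (1 - u) ^ (n - Suc 0))) + real i * u ^ (i - Suc 0) * (1 - u) ^ n) (at u)"
    by (rule DERIV_mult'[OF d1 d2])
  note d4 = DERIV_cmult[OF d3, of c]
  have eqf: "(\<lambda>u. pb m u i) = (\<lambda>u. c * (u ^ i * (1 - u) ^ n))"
    unfolding pb_def c_def n_def by (auto simp: fun_eq_iff)
  have e: "c * real n = real (Suc i) * real (m choose Suc i)"
    unfolding c_def n_def using binom_absorb_real[of i m] by (simp add: algebra_simps)
  have "c * (u ^ i * (of_nat n * ((0 - 1) * (1 - u) ^ (n - Suc 0))) + real i * u ^ (i - Suc 0) * (1 - u) ^ n)
      = real i * c * u ^ (i - 1) * (1 - u) ^ n - (c * real n) * u ^ i * (1 - u) ^ (n - 1)"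
    by (simp add: algebra_simps)
  also have "\<dots> = beta_dens m i u - beta_dens m (Suc i) u"
    unfolding beta_dens_def e unfolding c_def n_def by (simp add: algebra_simps)
  finally have val: "c * (u ^ i * (of_nat n * ((0 - 1) * (1 - u) ^ (n - Suc 0))) + real i * u ^ (i - Suc 0) * (1 - u) ^ n)
      = beta_dens m i u - beta_dens m (Suc i) u" .
  show ?thesis unfolding eqf by (rule DERIV_cong[OF d4 val])
qed

lemma beta_dens_cont: "continuous_on S (beta_dens m i)"
  unfolding beta_dens_def by (intro continuous_intros)

lemma beta_cdf_step:
  assumes "0 \<le> y" "1 \<le> i"
  shows "beta_cdf m i y = beta_cdf m (Suc i) y + pb m y i"
proof -
  have int1: "beta_dens m i integrable_on {0..y}" "beta_dens m (Suc i) integrable_on {0..y}"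
    by (intro integrable_continuous_interval beta_dens_cont)+
  have "((\<lambda>u. beta_dens m i u - beta_dens m (Suc i) u) has_integral (pb m y i - pb m 0 i)) {0..y}"
  proof (rule fundamental_theorem_of_calculus[OF assms(1)])
    fix x :: real assume "x \<in> {0..y}"
    show "((\<lambda>u. pb m u i) has_vector_derivative (beta_dens m i x - beta_dens m (Suc i) x)) (at x within {0..y})"
      using pb_deriv[of m i x] by (simp add: has_real_derivative_iff_has_vector_derivative[symmetric] has_field_derivative_at_within)
  qed
  then have "integral {0..y} (\<lambda>u. beta_dens m i u - beta_dens m (Suc i) u) = pb m y i"
    using assms by (simp add: integral_unique pb_def)
  then show ?thesis
    unfolding beta_cdf_def using Henstock_Kurzweil_Integration.integral_diff[OF int1] by simp
qed

lemma beta_cdf_big: "m < i \<Longrightarrow> beta_cdf m i y = 0"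
proof -
  assume "m < i"
  then have "beta_dens m i = (\<lambda>u. 0)" unfolding beta_dens_def by (auto simp: binomial_eq_0)
  then show ?thesis unfolding beta_cdf_def by simp
qed

lemma beta_cdf_tail:
  assumes "0 \<le> y" "1 \<le> i"
  shows "beta_cdf m i y = (\<Sum>k=i..m. pb m y k)"
proof (cases "i \<le> m + 1")
  case True
  show ?thesis
  proof (rule inc_induct[OF True, where P = "\<lambda>n. beta_cdf m n y = (\<Sum>k=n..m. pb m y k)"])
    show "beta_cdf m (m + 1) y = (\<Sum>k=m + 1..m. pb m y k)" by (simp add: beta_cdf_big)
  next
    fix n assume step: "i \<le> n" "n < m + 1" "beta_cdf m (Suc n) y = (\<Sum>k=Suc n..m. pb m y k)"
    have n1: "1 \<le> n" using step assms(2) by simp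
    have "beta_cdf m n y = beta_cdf m (Suc n) y + pb m y n"
      by (rule beta_cdf_step[OF assms(1) n1])
    also have "\<dots> = (\<Sum>k=Suc n..m. pb m y k) + pb m y n"
      using step by auto
    also have "\<dots> = (\<Sum>k=n..m. pb m y k)"
      using step by (simp add: sum.atLeast_Suc_atMost[of n m])
    finally show "beta_cdf m n y = (\<Sum>k=n..m. pb m y k)" .
  qed
next
  case False
  then show ?thesis by (simp add: beta_cdf_big)
qed




definition tailm :: "nat \<Rightarrow> real \<Rightarrow> nat \<Rightarrow> real" where
  "tailm m y i = (\<Sum>k=i..m. pb m y k)"

definition accm :: "nat \<Rightarrow> real \<Rightarrow> nat \<Rightarrow> real" where
  "accm m y r = (\<Sum>i\<le>r. real i * pb m y i)"

lemma tail_step: "tailm m y i = pb m y i + tailm m y (Suc i)"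
proof (cases "i \<le> m")
  case True
  then show ?thesis unfolding tailm_def by (simp add: sum.atLeast_Suc_atMost[of i m])
next
  case False
  then show ?thesis unfolding tailm_def pb_def by (simp add: binomial_eq_0)
qed

lemma tail_zero: "tailm m y 0 = 1"
proof -
  have "tailm m y 0 = (\<Sum>k\<le>m. real (m choose k) * y ^ k * (1 - y) ^ (m - k))"
    unfolding tailm_def pb_def by (simp add: atLeast0AtMost)
  also have "\<dots> = (y + (1 - y)) ^ m" by (rule binomial_ring[symmetric])
  finally show ?thesis by simp
qed

lemma tail_sum_one: "(\<Sum>k\<le>r. pb m y k) + tailm m y (Suc r) = 1"
proof (induction r)
  case 0
  then show ?case using tail_step[of m y 0] tail_zero[of m y] by simp
next
  case (Suc r)
  then show ?case using tail_step[of m y "Suc r"] by simp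
qed

lemma tail_nonneg: "0 \<le> y \<Longrightarrow> y \<le> 1 \<Longrightarrow> 0 \<le> tailm m y i"
  unfolding tailm_def by (intro sum_nonneg pb_nonneg) auto

lemma sum_cdf:
  assumes "0 \<le> y"
  shows "(\<Sum>i=1..r. beta_cdf m i y) = accm m y r + real r * tailm m y (Suc r)"
proof (induction r)
  case 0
  then show ?case unfolding accm_def by simp
next
  case (Suc r)
  have "(\<Sum>i=1..Suc r. beta_cdf m i y) = accm m y r + real r * tailm m y (Suc r) + beta_cdf m (Suc r) y"
    using Suc by simp
  also have "beta_cdf m (Suc r) y = tailm m y (Suc r)"
    unfolding tailm_def using beta_cdf_tail[OF assms] by simp
  also have "accm m y r + real r * tailm m y (Suc r) + tailm m y (Suc r)
      = accm m y (Suc r) + real (Suc r) * tailm m y (Suc (Suc r))"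
    unfolding accm_def using tail_step[of m y "Suc r"] by (simp add: algebra_simps)
  finally show ?case .
qed

lemma sum_dens:
  shows "(\<Sum>i=1..r. beta_dens m i y) * y = accm m y r"
proof -
  have "(\<Sum>i=1..r. beta_dens m i y) * y = (\<Sum>i=1..r. real i * pb m y i)"
    unfolding sum_distrib_right
  proof (rule sum.cong)
    fix i assume "i \<in> {1..r}"
    then obtain j where j: "i = Suc j" by (cases i) auto
    show "beta_dens m i y * y = real i * pb m y i"
      unfolding beta_dens_def pb_def j by (simp add: algebra_simps)
  qed simp
  also have "\<dots> = accm m y r"
    unfolding accm_def by (rule sum.mono_neutral_left) auto
  finally show ?thesis .
qed

lemma T_sum: "(\<Sum>k<r. real (r - k) * pb m y k) = real r * (\<Sum>k\<le>r. pb m y k) - accm m y r"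
proof -
  have "(\<Sum>k<r. real (r - k) * pb m y k) = (\<Sum>k\<le>r. real (r - k) * pb m y k)"
    by (simp add: lessThan_Suc_atMost[symmetric])
  also have "\<dots> = (\<Sum>k\<le>r. real r * pb m y k - real k * pb m y k)"
    by (rule sum.cong) (auto simp: of_nat_diff algebra_simps)
  also have "\<dots> = real r * (\<Sum>k\<le>r. pb m y k) - accm m y r"
    unfolding accm_def by (simp add: sum_subtractf sum_distrib_left)
  finally show ?thesis .
qed

lemma pb_shift:
  assumes "j < m"
  shows "real (Suc j) * pb m y (Suc j) * (1 - y) = real (m - j) * y * pb m y j"
proof -
  have e: "(1 - y) ^ (m - Suc j) * (1 - y) = (1 - y) ^ (m - j)"
    using assms by (metis Suc_diff_Suc power_Suc2)
  have "real (Suc j) * pb m y (Suc j) * (1 - y)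
      = (real (Suc j) * real (m choose Suc j)) * y ^ Suc j * ((1 - y) ^ (m - Suc j) * (1 - y))"
    unfolding pb_def by (simp add: algebra_simps)
  also have "\<dots> = (real (m - j) * real (m choose j)) * y ^ Suc j * (1 - y) ^ (m - j)"
    by (simp only: binom_absorb_real e)
  also have "\<dots> = real (m - j) * y * pb m y j"
    unfolding pb_def by (simp add: algebra_simps)
  finally show ?thesis .
qed

lemma acc_shift:
  assumes "r \<le> m"
  shows "accm m y r * (1 - y) = y * (\<Sum>j<r. real (m - j) * pb m y j)"
proof -
  have "accm m y r * (1 - y) = (\<Sum>i<Suc r. real i * pb m y i * (1 - y))"
    unfolding accm_def by (simp add: sum_distrib_right lessThan_Suc_atMost)
  also have "\<dots> = (\<Sum>j<r. real (Suc j) * pb m y (Suc j) * (1 - y))"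
    by (subst sum.lessThan_Suc_shift) simp
  also have "\<dots> = (\<Sum>j<r. real (m - j) * y * pb m y j)"
    by (rule sum.cong) (use assms pb_shift in auto)
  also have "\<dots> = y * (\<Sum>j<r. real (m - j) * pb m y j)"
    by (simp add: sum_distrib_left algebra_simps)
  finally show ?thesis .
qed

lemma key_ineq:
  assumes y: "0 < y" "y < 1" and r: "1 \<le> r" "r < m"
  shows "real r * ((real r + 1) * pb m y (Suc r)) * (\<Sum>k<r. real (r - k) * pb m y k) < (accm m y r) ^ 2"
proof -
  define T where "T = (\<Sum>k<r. real (r - k) * pb m y k)"
  define B where "B = (\<Sum>j<r. real (m - j) * pb m y j)"
  have kc: "real r * real (m - r) * pb m y r * T < accm m y r * B"
    using key_comb[OF y r] unfolding T_def B_def accm_def .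
  have sh1: "accm m y r * (1 - y) = y * B" unfolding B_def using acc_shift r by simp
  have sh2: "(real r + 1) * pb m y (Suc r) * (1 - y) = real (m - r) * y * pb m y r"
    using pb_shift[of r m y] r by (simp add: add.commute)
  have "real r * ((real r + 1) * pb m y (Suc r)) * T * (1 - y)
      = real r * T * ((real r + 1) * pb m y (Suc r) * (1 - y))" by (simp only: mult_ac)
  also have "\<dots> = real r * T * (real (m - r) * y * pb m y r)" by (simp only: sh2)
  also have "\<dots> = y * (real r * real (m - r) * pb m y r * T)" by (simp only: mult_ac)
  also have "\<dots> < y * (accm m y r * B)"
    using kc y by simp
  also have "\<dots> = accm m y r * (y * B)" by (simp only: mult_ac)
  also have "\<dots> = accm m y r * (accm m y r * (1 - y))" by (simp only: sh1)
  also have "\<dots> = (accm m y r) ^ 2 * (1 - y)" by (simp add: power2_eq_square)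
  finally show ?thesis unfolding T_def using y by simp
qed




lemma frac_cmp:
  fixes N0 N1 D0 D1 :: real
  assumes "N1 * D0 < N0 * D1" "0 < D0" "0 < D1"
  shows "N1 / D1 < N0 / D0"
  using assms by (simp add: field_simps)

lemma bstrat_eq:
  assumes "0 < y" "1 \<le> r"
  shows "bstrat m r y = accm m y r / (real r * y)"
proof -
  have "(\<Sum>i=1..r. beta_dens m i y) = accm m y r / y"
    using sum_dens[where r=r and m=m and y=y] assms by (simp add: field_simps)
  then show ?thesis unfolding bstrat_def using assms by simp
qed

lemma Bstrat_eq:
  assumes "0 \<le> y" "1 \<le> r"
  shows "Bstrat m r y = (accm m y r + real r * tailm m y (Suc r)) / real r"
  unfolding Bstrat_def using sum_cdf[OF assms(1), of m r] by simp

lemma acc_pos: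
  assumes "0 < y" "y < 1" "1 \<le> r" "1 \<le> m"
  shows "0 < accm m y r"
proof -
  have "real 1 * pb m y 1 \<le> accm m y r"
    unfolding accm_def
    by (rule member_le_sum) (use assms pb_nonneg in auto)
  moreover have "0 < pb m y 1" using pb_pos assms by auto
  ultimately show ?thesis by simp
qed

lemma T_pos:
  assumes "0 < y" "y < 1" "1 \<le> r"
  shows "0 < (\<Sum>k<r. real (r - k) * pb m y k)"
proof -
  have "real (r - 0) * pb m y 0 \<le> (\<Sum>k<r. real (r - k) * pb m y k)"
    by (rule member_le_sum) (use assms pb_nonneg in auto)
  moreover have "0 < real (r - 0) * pb m y 0" using pb_pos assms by auto
  ultimately show ?thesis by simp
qed

definition Rf :: "nat \<Rightarrow> real \<Rightarrow> nat \<Rightarrow> real" where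
  "Rf m y r = bstrat m r y / (Bstrat m r y * (1 - Bstrat m r y))"

lemma level_facts:
  assumes y: "0 < y" "y < 1" and r: "1 \<le> r" "r \<le> m"
  defines "a \<equiv> accm m y r" and "u \<equiv> tailm m y (Suc r)"
  shows "bstrat m r y = a / (real r * y)"
    and "Bstrat m r y = (a + real r * u) / real r"
    and "1 - Bstrat m r y = (real r * (1 - u) - a) / real r"
    and "0 < a" and "0 < real r * (1 - u) - a" and "0 < a + real r * u"
    and "0 \<le> u" and "u \<le> 1"
proof -
  show b: "bstrat m r y = a / (real r * y)" unfolding a_def using bstrat_eq y r by simp
  show B: "Bstrat m r y = (a + real r * u) / real r" unfolding a_def u_def using Bstrat_eq y r by simp
  show "1 - Bstrat m r y = (real r * (1 - u) - a) / real r"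
    unfolding B using r by (simp add: field_simps)
  show a0: "0 < a" unfolding a_def using acc_pos y r by simp
  have V: "(\<Sum>k\<le>r. pb m y k) = 1 - u" unfolding u_def using tail_sum_one[where r=r and m=m and y=y] by simp
  show "0 < real r * (1 - u) - a"
    using T_pos[OF y r(1), of m] T_sum[of r m y] V unfolding a_def by simp
  show u0: "0 \<le> u" unfolding u_def using tail_nonneg y by simp
  show "0 < a + real r * u" using a0 u0 by (intro add_pos_nonneg) auto
  have "0 \<le> (\<Sum>k\<le>r. pb m y k)" using pb_nonneg y by (intro sum_nonneg) auto
  then show "u \<le> 1" using V by simp
qed

lemma Rf_eq:
  assumes y: "0 < y" "y < 1" and r: "1 \<le> r" "r \<le> m"
  shows "Rf m y r = real r * accm m y r /
     (y * ((accm m y r + real r * tailm m y (Suc r)) * (real r * (1 - tailm m y (Suc r)) - accm m y r)))"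
proof -
  note L = level_facts[OF y r]
  show ?thesis unfolding Rf_def L(1) L(2) L(3)[unfolded L(2)]
    using L(4-6) y r by (simp add: field_simps)
qed

lemma Rf_pos_parts:
  assumes y: "0 < y" "y < 1" and r: "1 \<le> r" "r \<le> m"
  shows "0 < bstrat m r y" "0 < Bstrat m r y * (1 - Bstrat m r y)"
proof -
  note L = level_facts[OF y r]
  show "0 < bstrat m r y" unfolding L(1) using L(4) y r by simp
  show "0 < Bstrat m r y * (1 - Bstrat m r y)" unfolding L(2) L(3)[unfolded L(2)]
    using L(5,6) r by simp
qed

lemma Rf_mono:
  assumes y: "0 < y" "y < 1" and r: "1 \<le> r" "r < m"
  shows "Rf m y (Suc r) < Rf m y r"
proof -
  define a where "a = accm m y r"
  define u where "u = tailm m y (Suc r)"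
  define p where "p = pb m y (Suc r)"
  define T where "T = real r * (1 - u) - a"
  define S where "S = a + real r * u"
  note L = level_facts[OF y r(1) less_imp_le[OF r(2)]]
  have a0: "0 < a" and T0: "0 < T" and S0: "0 < S" and u0: "0 \<le> u" and u1: "u \<le> 1"
    using L unfolding a_def u_def T_def S_def by auto
  have p0: "0 \<le> p" unfolding p_def using pb_nonneg y by simp
  have up: "p \<le> u" unfolding p_def u_def using tail_step[of m y "Suc r"] tail_nonneg[of y m "Suc (Suc r)"] y by simp
  have acc1: "accm m y (Suc r) = a + (real r + 1) * p" unfolding a_def p_def accm_def by simp
  have tail1: "tailm m y (Suc (Suc r)) = u - p" unfolding u_def p_def using tail_step[of m y "Suc r"] by simp
  have key: "real r * ((real r + 1) * p) * T < a ^ 2"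
  proof -
    have "(\<Sum>k<r. real (r - k) * pb m y k) = T"
      unfolding T_def a_def u_def using T_sum[of r m y] tail_sum_one[where r=r and m=m and y=y] by simp
    then show ?thesis using key_ineq[OF y r] unfolding p_def a_def by simp
  qed
  have am: "(real r + 1) * (a + (real r + 1) * p) * ((a + real r * u) * T)
      < real r * a * ((a + real r * u + u) * (T + (1 - u)))"
    by (rule alg_main) (use r a0 T0 up p0 u1 key in \<open>auto simp: T_def\<close>)
  have R0: "Rf m y r = real r * a / (y * (S * T))"
    using Rf_eq[OF y r(1) less_imp_le[OF r(2)]] unfolding a_def u_def S_def T_def by simp
  have R1: "Rf m y (Suc r) = (real r + 1) * (a + (real r + 1) * p) / (y * ((S + u) * (T + (1 - u))))"
  proof -
    have "Rf m y (Suc r) = real (Suc r) * accm m y (Suc r) /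
     (y * ((accm m y (Suc r) + real (Suc r) * tailm m y (Suc (Suc r))) * (real (Suc r) * (1 - tailm m y (Suc (Suc r))) - accm m y (Suc r))))"
      using Rf_eq[OF y, of "Suc r" m] r by simp
    also have "\<dots> = (real r + 1) * (a + (real r + 1) * p) / (y * ((S + u) * (T + (1 - u))))"
      unfolding acc1 tail1 S_def T_def by (simp add: algebra_simps)
    finally show ?thesis .
  qed
  have D0: "0 < y * (S * T)" using y S0 T0 by simp
  have D1: "0 < y * ((S + u) * (T + (1 - u)))" using y S0 T0 u0 u1 by (intro mult_pos_pos) auto
  have "y * ((real r + 1) * (a + (real r + 1) * p) * ((a + real r * u) * T))
      < y * (real r * a * ((a + real r * u + u) * (T + (1 - u))))"
    using am y by simp
  then have "(real r + 1) * (a + (real r + 1) * p) * (y * (S * T)) < real r * a * (y * ((S + u) * (T + (1 - u))))"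
    unfolding S_def by (simp only: mult_ac)
  then show ?thesis unfolding R0 R1 using D0 D1 by (rule frac_cmp)
qed

lemma Rf_strict:
  assumes y: "0 < y" "y < 1" and "1 \<le> r" "r < s" "s \<le> m"
  shows "Rf m y s < Rf m y r"
  using assms(4,5)
proof (induction s rule: less_induct)
  case (less s)
  obtain s' where s: "s = Suc s'" using less.prems by (cases s) auto
  have m1: "Rf m y (Suc s') < Rf m y s'" by (rule Rf_mono) (use assms less.prems s in auto)
  show ?case
  proof (cases "r = s'")
    case True then show ?thesis using m1 s by simp
  next
    case False
    then have "Rf m y s' < Rf m y r" using less.IH[of s'] less.prems s by auto
    then show ?thesis using m1 s by simp
  qed
qed




lemma cs_identity:
  fixes I :: "nat set" and l A b :: "nat \<Rightarrow> real"
  assumes fin: "finite I" and A: "\<And>r. r \<in> I \<Longrightarrow> A r \<noteq> 0"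
  shows "(\<Sum>r\<in>I. \<Sum>s\<in>I. l r * l s * (A r * b s - A s * b r)^2 / (A r * A s))
       = 2 * ((\<Sum>r\<in>I. l r * b r ^ 2 / A r) * (\<Sum>r\<in>I. l r * A r) - (\<Sum>r\<in>I. l r * b r)^2)"
proof -
  have trm: "l r * l s * (A r * b s - A s * b r)^2 / (A r * A s)
      = (l r * A r) * (l s * b s ^ 2 / A s) + (l r * b r ^ 2 / A r) * (l s * A s) - 2 * ((l r * b r) * (l s * b s))"
    if "r \<in> I" "s \<in> I" for r s
    using A[OF that(1)] A[OF that(2)] by (simp add: field_simps power2_eq_square)
  have "(\<Sum>r\<in>I. \<Sum>s\<in>I. l r * l s * (A r * b s - A s * b r)^2 / (A r * A s))
      = (\<Sum>r\<in>I. \<Sum>s\<in>I. (l r * A r) * (l s * b s ^ 2 / A s) + (l r * b r ^ 2 / A r) * (l s * A s) - 2 * ((l r * b r) * (l s * b s)))"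
    by (intro sum.cong refl trm)
  also have "\<dots> = (\<Sum>r\<in>I. \<Sum>s\<in>I. (l r * A r) * (l s * b s ^ 2 / A s))
      + (\<Sum>r\<in>I. \<Sum>s\<in>I. (l r * b r ^ 2 / A r) * (l s * A s)) - 2 * (\<Sum>r\<in>I. \<Sum>s\<in>I. (l r * b r) * (l s * b s))"
    by (simp only: sum.distrib sum_subtractf sum_distrib_left[symmetric])
  also have "\<dots> = (\<Sum>r\<in>I. l r * A r) * (\<Sum>s\<in>I. l s * b s ^ 2 / A s)
      + (\<Sum>r\<in>I. l r * b r ^ 2 / A r) * (\<Sum>s\<in>I. l s * A s) - 2 * ((\<Sum>r\<in>I. l r * b r) * (\<Sum>s\<in>I. l s * b s))"
    by (simp only: sum_product)
  also have "\<dots> = 2 * ((\<Sum>r\<in>I. l r * b r ^ 2 / A r) * (\<Sum>r\<in>I. l r * A r) - (\<Sum>r\<in>I. l r * b r)^2)"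
    by (simp add: power2_eq_square algebra_simps)
  finally show ?thesis .
qed

lemma main_result:
  fixes m :: nat and lam :: "nat \<Rightarrow> real" and y :: real
  assumes m: "1 \<le> m" and y: "0 < y" "y < 1"
    and lam0: "\<And>r. r \<in> {1..m} \<Longrightarrow> lam r \<ge> 0"
    and lam1: "(\<Sum>r=1..m. lam r) = 1"
  shows "sigma_ml2 m lam y \<le> sigma_mb2 m lam y
    \<and> (sigma_ml2 m lam y = sigma_mb2 m lam y \<longleftrightarrow> m = 1 \<or> (\<exists>r\<in>{1..m}. lam r = 1))"
proof -
  define I where "I = {1..m}"
  define b where "b r = bstrat m r y" for r
  define A where "A r = Bstrat m r y * (1 - Bstrat m r y)" for r
  define X where "X = (\<Sum>r\<in>I. lam r * b r ^ 2 / A r)"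
  define Y where "Y = (\<Sum>r\<in>I. lam r * A r)"
  define Z where "Z = (\<Sum>r\<in>I. lam r * b r)"
  have fin: "finite I" unfolding I_def by simp
  have bpos: "0 < b r" and Apos: "0 < A r" if "r \<in> I" for r
    using Rf_pos_parts[OF y, of r m] that unfolding I_def b_def A_def by auto
  have l0: "0 \<le> lam r" if "r \<in> I" for r using lam0 that unfolding I_def by simp
  obtain r0 where r0: "r0 \<in> I" "0 < lam r0"
  proof -
    have "\<exists>r\<in>I. lam r \<noteq> 0"
    proof (rule ccontr)
      assume "\<not> ?thesis"
      then have "(\<Sum>r=1..m. lam r) = 0" unfolding I_def by simp
      then show False using lam1 by simp
    qed
    then obtain r where "r \<in> I" "lam r \<noteq> 0" by blast
    with l0[OF this(1)] show ?thesis using that by force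
  qed
  have X0: "0 < X" unfolding X_def
  proof (rule sum_pos2[OF fin r0(1)])
    show "0 < lam r0 * b r0 ^ 2 / A r0"
      using r0 bpos[OF r0(1)] Apos[OF r0(1)] by (intro divide_pos_pos mult_pos_pos) auto
    fix r assume "r \<in> I"
    then show "0 \<le> lam r * b r ^ 2 / A r"
      using bpos Apos l0 by (intro divide_nonneg_pos mult_nonneg_nonneg) auto
  qed
  have Y0: "0 < Y" unfolding Y_def
  proof (rule sum_pos2[OF fin r0(1)])
    show "0 < lam r0 * A r0" using r0 Apos[OF r0(1)] by simp
    fix r assume "r \<in> I"
    then have "0 \<le> lam r" "0 \<le> A r" using l0 Apos less_imp_le by auto
    then show "0 \<le> lam r * A r" by simp
  qed
  have Z0: "0 < Z" unfolding Z_def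
  proof (rule sum_pos2[OF fin r0(1)])
    show "0 < lam r0 * b r0" using r0 bpos[OF r0(1)] by simp
    fix r assume "r \<in> I"
    then have "0 \<le> lam r" "0 \<le> b r" using l0 bpos less_imp_le by auto
    then show "0 \<le> lam r * b r" by simp
  qed
  have ml: "sigma_ml2 m lam y = inverse X"
    unfolding sigma_ml2_def X_def I_def b_def A_def by simp
  have mb: "sigma_mb2 m lam y = Y / Z ^ 2"
    unfolding sigma_mb2_def Y_def Z_def I_def b_def A_def by (simp add: mult.assoc)
  define Q where "Q = (\<Sum>r\<in>I. \<Sum>s\<in>I. lam r * lam s * (A r * b s - A s * b r)^2 / (A r * A s))"
  have Qeq: "Q = 2 * (X * Y - Z ^ 2)"
    unfolding Q_def X_def Y_def Z_def using cs_identity[OF fin, of A lam b] Apos by fastforce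
  have qterm0: "0 \<le> lam r * lam s * (A r * b s - A s * b r)^2 / (A r * A s)" if "r \<in> I" "s \<in> I" for r s
    using l0[OF that(1)] l0[OF that(2)] Apos[OF that(1)] Apos[OF that(2)] by simp
  have Q0: "0 \<le> Q" unfolding Q_def by (intro sum_nonneg qterm0)
  have ineq_iff: "inverse X \<le> Y / Z ^ 2 \<longleftrightarrow> Z ^ 2 \<le> X * Y"
    using X0 Z0 by (simp add: field_simps)
  have eq_iff: "inverse X = Y / Z ^ 2 \<longleftrightarrow> Z ^ 2 = X * Y"
    using X0 Z0 by (simp add: field_simps)
  have part1: "sigma_ml2 m lam y \<le> sigma_mb2 m lam y"
    unfolding ml mb ineq_iff using Q0 Qeq by simp
  have "sigma_ml2 m lam y = sigma_mb2 m lam y \<longleftrightarrow> Q = 0"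
    unfolding ml mb eq_iff Qeq by auto
  also have "\<dots> \<longleftrightarrow> (\<forall>r\<in>I. \<forall>s\<in>I. lam r * lam s * (A r * b s - A s * b r)^2 / (A r * A s) = 0)"
    unfolding Q_def
    by (simp add: sum_nonneg_eq_0_iff[OF fin] sum_nonneg qterm0)
  also have "\<dots> \<longleftrightarrow> (\<forall>r\<in>I. \<forall>s\<in>I. 0 < lam r \<longrightarrow> 0 < lam s \<longrightarrow> r = s)"
  proof -
    have "lam r * lam s * (A r * b s - A s * b r)^2 / (A r * A s) = 0 \<longleftrightarrow> (0 < lam r \<longrightarrow> 0 < lam s \<longrightarrow> r = s)"
      if rs: "r \<in> I" "s \<in> I" for r s
    proof -
      have Ar: "A r \<noteq> 0" and As: "A s \<noteq> 0" using Apos rs by (auto simp: less_imp_neq[symmetric])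
      have R: "Rf m y r = b r / A r" "Rf m y s = b s / A s" unfolding Rf_def b_def A_def by simp_all
      have "A r * b s - A s * b r = 0 \<longleftrightarrow> r = s"
      proof
        assume h: "A r * b s - A s * b r = 0"
        then have "Rf m y r = Rf m y s" unfolding R using Ar As by (simp add: field_simps)
        moreover have "r < s \<Longrightarrow> Rf m y s < Rf m y r"
        proof -
          assume "r < s"
          moreover have "1 \<le> r" "s \<le> m" using rs unfolding I_def by auto
          ultimately show ?thesis by (intro Rf_strict[OF y])
        qed
        moreover have "s < r \<Longrightarrow> Rf m y r < Rf m y s"
        proof -
          assume "s < r"
          moreover have "1 \<le> s" "r \<le> m" using rs unfolding I_def by auto
          ultimately show ?thesis by (intro Rf_strict[OF y])
        qed
        ultimately show "r = s"
        proof -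
          assume e: "Rf m y r = Rf m y s" and h1: "r < s \<Longrightarrow> Rf m y s < Rf m y r"
            and h2: "s < r \<Longrightarrow> Rf m y r < Rf m y s"
          show "r = s"
          proof (rule ccontr)
            assume "r \<noteq> s"
            then have "r < s \<or> s < r" by arith
            then show False using e h1 h2 by force
          qed
        qed
      qed simp
      then show ?thesis using l0[OF rs(1)] l0[OF rs(2)] Ar As by auto
    qed
    then show ?thesis by auto
  qed
  also have "\<dots> \<longleftrightarrow> m = 1 \<or> (\<exists>r\<in>{1..m}. lam r = 1)"
  proof
    assume H: "\<forall>r\<in>I. \<forall>s\<in>I. 0 < lam r \<longrightarrow> 0 < lam s \<longrightarrow> r = s"
    have "\<forall>s\<in>I - {r0}. lam s = 0"
    proof
      fix s assume s: "s \<in> I - {r0}"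
      show "lam s = 0"
      proof (rule ccontr)
        assume "lam s \<noteq> 0"
        then have "0 < lam s" using l0[of s] s by simp
        then have "s = r0" using H r0 s by blast
        then show False using s by simp
      qed
    qed
    then have "(\<Sum>s\<in>I. lam s) = lam r0"
      using fin r0(1) by (subst sum.remove[of I r0]) auto
    then have "lam r0 = 1" using lam1 unfolding I_def by simp
    then show "m = 1 \<or> (\<exists>r\<in>{1..m}. lam r = 1)" using r0 unfolding I_def by blast
  next
    assume H: "m = 1 \<or> (\<exists>r\<in>{1..m}. lam r = 1)"
    show "\<forall>r\<in>I. \<forall>s\<in>I. 0 < lam r \<longrightarrow> 0 < lam s \<longrightarrow> r = s"
    proof (cases "m = 1")
      case True then show ?thesis unfolding I_def by auto
    next
      case False
      then obtain r1 where r1: "r1 \<in> I" "lam r1 = 1" using H unfolding I_def by blast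
      have "(\<Sum>s\<in>I. lam s) = lam r1 + (\<Sum>s\<in>I - {r1}. lam s)"
        using fin r1(1) by (subst sum.remove[of I r1]) auto
      then have "(\<Sum>s\<in>I - {r1}. lam s) = 0" using lam1 r1 unfolding I_def by simp
      then have z: "\<forall>s\<in>I - {r1}. lam s = 0"
        using sum_nonneg_eq_0_iff[of "I - {r1}" lam] fin l0 by auto
      show ?thesis
      proof (intro ballI impI)
        fix r s assume "r \<in> I" "s \<in> I" "0 < lam r" "0 < lam s"
        then have "r = r1" "s = r1" using z by (metis DiffI less_irrefl singletonD)+
        then show "r = s" by simp
      qed
    qed
  qed
  finally show ?thesis using part1 by simp
qed


theorem theorem4:
  fixes m :: nat and M :: "real measure" and t :: real and lam :: "nat \<Rightarrow> real"
  assumes "m \<ge> 1"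
    and "real_distribution M"
    and "0 < cdf M t" and "cdf M t < 1"
    and "\<And>r. r \<in> {1..m} \<Longrightarrow> lam r \<ge> 0"
    and "(\<Sum>r=1..m. lam r) = 1"
  shows "sigma_ml2 m lam (cdf M t) \<le> sigma_mb2 m lam (cdf M t)
    \<and> (sigma_ml2 m lam (cdf M t) = sigma_mb2 m lam (cdf M t)
         \<longleftrightarrow> m = 1 \<or> (\<exists>r\<in>{1..m}. lam r = 1))"
    using main_result[OF assms(1) assms(3) assms(4) assms(5) assms(6)] .

end
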